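(* Let $e=2$ and $\Lambda=\Lambda_0$. If $\lambda$ is an alternating $2$-regular partition whose last (smallest nonzero) part is odd, then the element $b_\lambda\in B(\Lambda_0)$ labelled by $\lambda$ is external.
   Context: Setting (level one, $e=2$). Let $\mathfrak g$ be the affine Lie algebra of type $A^{(1)}_1$ with simple roots $\alpha_0,\alpha_1$, simple coroots $h_0,h_1$, fundamental weights $\Lambda_0,\Lambda_1$ and null root $\delta=\alpha_0+\alpha_1$. $B(\Lambda_0)$ is the crystal of the irreducible integrable highest weight module $V(\Lambda_0)$, with Kashiwara operators $\tilde e_i,\tilde f_i$ ($i\in\{0,1\}$). Its elements are labelled by $2$-regular partitions (partitions with distinct parts) in the standard Misra–Miwa/Kleshchev realization with the $e$-regular convention: the node in row $x$, column $y$ of a Young diagram has residue $(y-x)\bmod 2$, the weight of $\lambda$ is $\Lambda_0-\sum_{\text{nodes}}\alpha_{\mathrm{res}}$, and $\tilde f_i$ adds a good $i$-node. A $2$-regular partition is \emph{alternating} if the parities of its consecutive nonzero parts alternate between odd and even. For $b\in B(\Lambda)$, the hub of $b$ is $\theta(b)=(\theta_0,\theta_1)$ with $\theta_i=\langle \mathrm{wt}(b),h_i\rangle$. An element $b$ is \emph{external} if for every $i$ with $\theta_i\ge 0$ one has $\tilde e_i(b)=0$. *)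

theory Defs
  imports Main
begin

text \<open>Misra--Miwa / Kleshchev realization of the crystal B(Lambda_0) of type A_1^(1)
  (e = 2) on 2-regular partitions.  A partition is a list of positive parts in
  strictly decreasing order; the part in (0-indexed) list position r is row r+1
  of the Young diagram.  Residues i range over {0,1} (as naturals).\<close>

definition two_regular :: "nat list \<Rightarrow> bool" where
  "two_regular lam \<longleftrightarrow> sorted_wrt (>) lam \<and> 0 \<notin> set lam"

definition alternating :: "nat list \<Rightarrow> bool" where
  "alternating lam \<longleftrightarrow> (\<forall>k. Suc k < length lam \<longrightarrow> odd (lam ! k) \<noteq> odd (lam ! Suc k))"

definition part :: "nat list \<Rightarrow> nat \<Rightarrow> nat" where
  "part lam r = (if r < length lam then lam ! r else 0)"

text \<open>residue of the node in row x = r+1, column y: (y - x) mod 2\<close>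
definition res :: "nat \<Rightarrow> nat \<Rightarrow> nat" where
  "res r y = nat ((int y - int (Suc r)) mod 2)"

definition removable_row :: "nat list \<Rightarrow> nat \<Rightarrow> bool" where
  "removable_row lam r \<longleftrightarrow> r < length lam \<and> part lam (Suc r) < part lam r"

definition addable_row :: "nat list \<Rightarrow> nat \<Rightarrow> bool" where
  "addable_row lam r \<longleftrightarrow> r \<le> length lam \<and> (r = 0 \<or> part lam r < part lam (r - 1))"

text \<open>i-signature: read rows from bottom to top; (True, r) is the addable i-node
  of row r (a "+"), (False, r) the removable i-node of row r (a "-").\<close>
definition row_sig :: "nat \<Rightarrow> nat list \<Rightarrow> nat \<Rightarrow> (bool \<times> nat) list" where
  "row_sig i lam r =
     (if addable_row lam r \<and> res r (Suc (part lam r)) = i then [(True, r)] else []) @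
     (if removable_row lam r \<and> res r (part lam r) = i then [(False, r)] else [])"

definition signature :: "nat \<Rightarrow> nat list \<Rightarrow> (bool \<times> nat) list" where
  "signature i lam = concat (map (row_sig i lam) (rev [0..<Suc (length lam)]))"

text \<open>reduced signature: successively cancel adjacent pairs "-+" (a removable node
  followed by an addable node further up).\<close>
fun red_step :: "(bool \<times> nat) list \<Rightarrow> bool \<times> nat \<Rightarrow> (bool \<times> nat) list" where
  "red_step st (True, r) = (if st \<noteq> [] \<and> \<not> fst (last st) then butlast st else st @ [(True, r)])"
| "red_step st (False, r) = st @ [(False, r)]"

definition reduced_signature :: "nat \<Rightarrow> nat list \<Rightarrow> (bool \<times> nat) list" where
  "reduced_signature i lam = foldl red_step [] (signature i lam)"

text \<open>Kashiwara operator e_i: remove the good removable i-node (the lowest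
  uncancelled "-"); None stands for 0.\<close>
definition kash_e :: "nat \<Rightarrow> nat list \<Rightarrow> nat list option" where
  "kash_e i lam = (case find (\<lambda>p. \<not> fst p) (reduced_signature i lam) of
       None \<Rightarrow> None
     | Some p \<Rightarrow> Some (filter (\<lambda>x. 0 < x) (lam[snd p := lam ! snd p - 1])))"

definition count_res :: "nat \<Rightarrow> nat list \<Rightarrow> nat" where
  "count_res i lam = card {(r, y). r < length lam \<and> 1 \<le> y \<and> y \<le> lam ! r \<and> res r y = i}"

definition cartan :: "nat \<Rightarrow> nat \<Rightarrow> int" where
  "cartan i j = (if i = j then 2 else -2)"

text \<open>hub component theta_i = <wt(lam), h_i>, wt = Lambda_0 - sum over nodes alpha_res\<close>
definition hub :: "nat \<Rightarrow> nat list \<Rightarrow> int" where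
  "hub i lam = (if i = 0 then 1 else 0) - (\<Sum>j\<in>{0,1}. cartan i j * int (count_res j lam))"

definition external :: "nat list \<Rightarrow> bool" where
  "external lam \<longleftrightarrow> (\<forall>i\<in>{0,1}. 0 \<le> hub i lam \<longrightarrow> kash_e i lam = None)"

end

theory Submission
  imports Defs
begin

lemma res_alt: "res r y = (if even (y + r) then 1 else 0)"
proof -
  have "(int y - int (Suc r)) mod 2 = (if even (y + r) then 1 else 0)"
    by (cases "even (y + r)") (auto elim!: evenE oddE simp: algebra_simps, presburger+)
  thus ?thesis unfolding res_def by simp
qed

definition rc :: "nat \<Rightarrow> nat \<Rightarrow> nat \<Rightarrow> nat" where
  "rc r a i = card {y. 1 \<le> y \<and> y \<le> a \<and> res r y = i}"

lemma count_res_sum: "count_res i lam = (\<Sum>r<length lam. rc r (lam ! r) i)"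
proof -
  have "{(r, y). r < length lam \<and> 1 \<le> y \<and> y \<le> lam ! r \<and> res r y = i}
     = (SIGMA r:{..<length lam}. {y. 1 \<le> y \<and> y \<le> lam ! r \<and> res r y = i})" by auto
  moreover have "card (SIGMA r:{..<length lam}. {y. 1 \<le> y \<and> y \<le> lam ! r \<and> res r y = i})
     = (\<Sum>r<length lam. rc r (lam ! r) i)"
    unfolding rc_def by (rule card_SigmaI) auto
  ultimately show ?thesis unfolding count_res_def by simp
qed

lemma rc_Suc: "rc r (Suc a) i = rc r a i + (if res r (Suc a) = i then 1 else 0)"
proof (cases "res r (Suc a) = i")
  case True
  have "{y. 1 \<le> y \<and> y \<le> Suc a \<and> res r y = i} = insert (Suc a) {y. 1 \<le> y \<and> y \<le> a \<and> res r y = i}"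
    using True by auto
  moreover have "finite {y. 1 \<le> y \<and> y \<le> a \<and> res r y = i}" by auto
  ultimately show ?thesis using True unfolding rc_def by simp
next
  case False
  have "{y. 1 \<le> y \<and> y \<le> Suc a \<and> res r y = i} = {y. 1 \<le> y \<and> y \<le> a \<and> res r y = i}"
    using False by (auto simp: le_Suc_eq)
  thus ?thesis using False unfolding rc_def by simp
qed

lemma rc_diff: "int (rc r a 0) - int (rc r a 1) = (if even a then 0 else if even r then 1 else -1)"
proof (induction a)
  case 0
  have "{y. 1 \<le> y \<and> y \<le> (0::nat) \<and> res r y = i} = {}" for i by auto
  then show ?case unfolding rc_def by (metis card.empty diff_self of_nat_0 even_zero)
next
  case (Suc a)
  then show ?case by (cases "even a"; cases "even r"; simp add: rc_Suc res_alt)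
qed

lemma par_aux:
  assumes "alternating lam" "lam \<noteq> []" "odd (last lam)"
  shows "j < length lam \<Longrightarrow> odd (lam ! (length lam - 1 - j)) \<longleftrightarrow> even j"
proof (induction j)
  case 0
  then show ?case using assms by (simp add: last_conv_nth)
next
  case (Suc j)
  define r where "r = length lam - 1 - Suc j"
  have r1: "Suc r = length lam - 1 - j" "Suc r < length lam" using Suc.prems r_def by auto
  have "odd (lam ! r) \<noteq> odd (lam ! Suc r)" using assms(1) r1 unfolding alternating_def by blast
  then show ?case using Suc r1 r_def by auto
qed

lemma par:
  assumes "alternating lam" "lam \<noteq> []" "odd (last lam)" "r < length lam"
  shows "odd (lam ! r) \<longleftrightarrow> even (length lam - 1 - r)"
proof -
  have "length lam - 1 - (length lam - 1 - r) = r" using assms(4) by auto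
  thus ?thesis using par_aux[OF assms(1-3), of "length lam - 1 - r"] assms(4) by auto
qed

lemma fold_noFalse:
  "\<forall>x\<in>set xs. fst x \<Longrightarrow> \<forall>x\<in>set st. fst x \<Longrightarrow> \<forall>x\<in>set (foldl red_step st xs). fst x"
proof (induction xs arbitrary: st)
  case Nil
  then show ?case by simp
next
  case (Cons a xs)
  obtain b r where a: "a = (b, r)" by (cases a)
  have b: b using Cons.prems a by auto
  have "\<forall>x\<in>set (red_step st a). fst x"
    using Cons.prems(2) b a by (auto dest: in_set_butlastD)
  then show ?case using Cons by simp
qed

lemma kash_none:
  assumes "\<And>r. r < length lam \<Longrightarrow> res r (lam ! r) \<noteq> i"
  shows "kash_e i lam = None"
proof -
  have "\<forall>x\<in>set (signature i lam). fst x"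
    using assms unfolding signature_def row_sig_def removable_row_def part_def
    by (auto split: if_splits)
  hence "\<forall>x\<in>set (reduced_signature i lam). fst x"
    unfolding reduced_signature_def using fold_noFalse[of "signature i lam" "[]"] by simp
  hence "find (\<lambda>p. \<not> fst p) (reduced_signature i lam) = None"
    by (simp add: find_None_iff) (metis fst_conv)
  thus ?thesis unfolding kash_e_def by simp
qed

theorem mainTheorem1:
  fixes lam :: "nat list"
  assumes "two_regular lam" and "alternating lam"
    and "lam \<noteq> []" and "odd (last lam)"
  shows "external lam"
proof -
  define k where "k = length lam"
  have k1: "k \<ge> 1" using assms(3) k_def by (cases lam) auto
  have P: "\<And>r. r < k \<Longrightarrow> odd (lam ! r) \<longleftrightarrow> even (k - 1 - r)"
    using par[OF assms(2-4)] k_def by auto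
  define f where "f r = (if even (lam ! r) then 0 else if even r then 1 else -1::int)" for r
  define D where "D = int (count_res 0 lam) - int (count_res 1 lam)"
  have D: "D = (\<Sum>r<k. f r)"
    unfolding D_def count_res_sum k_def f_def
    by (simp only: of_nat_sum sum_subtractf[symmetric] rc_diff)
  have h0: "hub 0 lam = 1 - 2 * D" unfolding hub_def D_def cartan_def by simp
  have h1: "hub 1 lam = 2 * D" unfolding hub_def D_def cartan_def by simp
  show ?thesis
  proof (cases "odd k")
    case True
    have fn: "\<And>r. r < k \<Longrightarrow> f r \<ge> 0"
    proof -
      fix r assume r: "r < k"
      show "f r \<ge> 0" using P[OF r] True r unfolding f_def by (cases "even (lam ! r)"; cases "even r"; simp; presburger)
    qed
    have "f 0 = 1" using P[of 0] k1 True unfolding f_def by auto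
    hence "f 0 \<le> (\<Sum>r<k. f r)" using k1 fn
      by (intro member_le_sum) auto
    hence "hub 0 lam < 0" using h0 D \<open>f 0 = 1\<close> by simp
    moreover have "kash_e 1 lam = None"
    proof (rule kash_none)
      fix r assume r: "r < length lam"
      show "res r (lam ! r) \<noteq> 1" using P[of r] r True k_def unfolding res_alt by (cases "even (lam ! r)"; simp; presburger)
    qed
    ultimately show ?thesis unfolding external_def by auto
  next
    case False
    have k2: "k \<ge> 2" using False k1 by presburger
    have fn: "\<And>r. r < k \<Longrightarrow> f r \<le> 0"
    proof -
      fix r assume r: "r < k"
      show "f r \<le> 0" using P[OF r] False r unfolding f_def by (cases "even (lam ! r)"; cases "even r"; simp; presburger)
    qed
    have "f 1 = -1" using P[of 1] k2 False unfolding f_def by auto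
    have "(\<Sum>r<k. f r) \<le> f 1"
    proof -
      have "(\<Sum>r<k. f r) = f 1 + (\<Sum>r\<in>{..<k} - {1}. f r)"
        using k2 by (subst sum.remove[of _ 1]) auto
      moreover have "(\<Sum>r\<in>{..<k} - {1}. f r) \<le> 0" using fn by (intro sum_nonpos) auto
      ultimately show ?thesis by simp
    qed
    hence "hub 1 lam < 0" using h1 D \<open>f 1 = -1\<close> by simp
    moreover have "kash_e 0 lam = None"
    proof (rule kash_none)
      fix r assume r: "r < length lam"
      show "res r (lam ! r) \<noteq> 0" using P[of r] r False k_def unfolding res_alt by (cases "even (lam ! r)"; simp; presburger)
    qed
    ultimately show ?thesis unfolding external_def by auto
  qed
qed

end
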